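(* Let $G$ be a directed acyclic graph on vertex set $V$ and let $\pi:V\to\{1,\dots,n\}$ be a bijection such that $xy\in E(G)$ implies $\pi(x)<\pi(y)$. Let $u,v\in V$ with $\pi(u)>\pi(v)$ be such that $G\cup\{uv\}$ is still acyclic. Let $W=\{w\in V:\pi(w)\in[\pi(v),\pi(u)]\}$, let $T\subseteq W$ be the set of vertices of $W$ reachable from $v$ in $G$ (including $v$), let $S\subseteq W$ be the set of vertices of $W$ that can reach $u$ in $G$ (including $u$), and let $Z=W\setminus(S\cup T)$. Then in $G\cup\{uv\}$: no vertex $t\in T$ can reach a vertex $s\in S$; no vertex $t\in T$ can reach a vertex $z\in Z$; and no vertex $z\in Z$ can reach a vertex $s\in S$. *)

theory Defs
  imports Main
begin

end

theory Submission
  imports Defs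
begin

lemma first_use:
  assumes "(x, y) \<in> (E \<union> {(u, v)})\<^sup>*"
  shows "(x, y) \<in> E\<^sup>* \<or> (x, u) \<in> E\<^sup>*"
  using assms
proof (induction rule: rtrancl_induct)
  case base then show ?case by simp
next
  case (step y z) then show ?case
    by (metis Un_iff rtrancl.rtrancl_into_rtrancl singletonD prod.inject)
qed

lemma last_use:
  assumes "(x, y) \<in> (E \<union> {(u, v)})\<^sup>*"
  shows "(x, y) \<in> E\<^sup>* \<or> (v, y) \<in> E\<^sup>*"
  using assms
proof (induction rule: rtrancl_induct)
  case base then show ?case by simp
next
  case (step y z) then show ?case
    by (metis Un_iff rtrancl.rtrancl_into_rtrancl rtrancl.rtrancl_refl singletonD prod.inject)
qed

theorem lemma2:
  fixes V :: "'a set" and E :: "('a \<times> 'a) set" and \<pi> :: "'a \<Rightarrow> nat" and n :: nat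
    and u v :: 'a and W T S Z :: "'a set"
  assumes edges: "E \<subseteq> V \<times> V"
    and acyc: "acyclic E"
    and bij: "bij_betw \<pi> V {1..n}"
    and topo: "\<And>x y. (x, y) \<in> E \<Longrightarrow> \<pi> x < \<pi> y"
    and uV: "u \<in> V" and vV: "v \<in> V"
    and uv: "\<pi> u > \<pi> v"
    and acyc': "acyclic (E \<union> {(u, v)})"
    and W_def: "W = {w \<in> V. \<pi> v \<le> \<pi> w \<and> \<pi> w \<le> \<pi> u}"
    and T_def: "T = {w \<in> W. (v, w) \<in> E\<^sup>*}"
    and S_def: "S = {w \<in> W. (w, u) \<in> E\<^sup>*}"
    and Z_def: "Z = W - (S \<union> T)"
  shows "(\<forall>t\<in>T. \<forall>s\<in>S. (t, s) \<notin> (E \<union> {(u, v)})\<^sup>*)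
       \<and> (\<forall>t\<in>T. \<forall>z\<in>Z. (t, z) \<notin> (E \<union> {(u, v)})\<^sup>*)
       \<and> (\<forall>z\<in>Z. \<forall>s\<in>S. (z, s) \<notin> (E \<union> {(u, v)})\<^sup>*)"
proof -
  let ?F = "E \<union> {(u, v)}"
  have sub: "E\<^sup>* \<subseteq> ?F\<^sup>*" by (rule rtrancl_mono) blast
  have noVU: "(v, u) \<notin> ?F\<^sup>*"
  proof
    assume "(v, u) \<in> ?F\<^sup>*"
    then have "(v, v) \<in> ?F\<^sup>+" by (simp add: rtrancl_into_trancl1)
    with acyc' show False by (simp add: acyclic_def)
  qed
  have c1: "\<forall>t\<in>T. \<forall>s\<in>S. (t, s) \<notin> ?F\<^sup>*"
  proof (intro ballI notI)
    fix t s assume t: "t \<in> T" and s: "s \<in> S" and ts: "(t, s) \<in> ?F\<^sup>*"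
    have "(v, t) \<in> ?F\<^sup>*" using t T_def sub by auto
    moreover have "(s, u) \<in> ?F\<^sup>*" using s S_def sub by auto
    ultimately have "(v, u) \<in> ?F\<^sup>*" using ts by (meson rtrancl_trans)
    with noVU show False by simp
  qed
  have c2: "\<forall>t\<in>T. \<forall>z\<in>Z. (t, z) \<notin> ?F\<^sup>*"
  proof (intro ballI notI)
    fix t z assume t: "t \<in> T" and z: "z \<in> Z" and tz: "(t, z) \<in> ?F\<^sup>*"
    have vt: "(v, t) \<in> E\<^sup>*" using t T_def by auto
    from first_use[OF tz] show False
    proof
      assume "(t, z) \<in> E\<^sup>*"
      then have "(v, z) \<in> E\<^sup>*" using vt by (meson rtrancl_trans)
      then show False using z Z_def T_def by auto
    next
      assume "(t, u) \<in> E\<^sup>*"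
      then have "(v, u) \<in> E\<^sup>*" using vt by (meson rtrancl_trans)
      then show False using noVU sub by auto
    qed
  qed
  have c3: "\<forall>z\<in>Z. \<forall>s\<in>S. (z, s) \<notin> ?F\<^sup>*"
  proof (intro ballI notI)
    fix z s assume z: "z \<in> Z" and s: "s \<in> S" and zs: "(z, s) \<in> ?F\<^sup>*"
    have su: "(s, u) \<in> E\<^sup>*" using s S_def by auto
    from last_use[OF zs] show False
    proof
      assume "(z, s) \<in> E\<^sup>*"
      then have "(z, u) \<in> E\<^sup>*" using su by (meson rtrancl_trans)
      then show False using z Z_def S_def by auto
    next
      assume "(v, s) \<in> E\<^sup>*"
      then have "(v, u) \<in> E\<^sup>*" using su by (meson rtrancl_trans)
      then show False using noVU sub by auto
    qed
  qed
  show ?thesis using c1 c2 c3 by blast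
qed

end
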